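(* Let $\sigma$ be an implicit signature and $\mathsf V$ a pseudovariety of finite semigroups. If $\mathsf V$ is $\sigma$-PR then $\mathsf V$ is $\sigma$-full; and if $\mathsf V$ is strongly $\sigma$-PR then $\mathsf V$ is strongly $\sigma$-full.
   Context: $\overline{\Omega}_X\mathsf V$ is the free pro-$\mathsf V$ semigroup on a finite alphabet $X$; $\Omega^\sigma_X\mathsf V$ is its subalgebra generated by $X$ under the operations of $\sigma$ (an implicit signature: a set of implicit operations of finite arity containing multiplication), with the induced topology; $\mathsf S$ is the pseudovariety of all finite semigroups and $p_{\mathsf V}:\overline{\Omega}_X\mathsf S\to\overline{\Omega}_X\mathsf V$ the natural continuous homomorphism. The Pin-Reutenauer procedure holds for a class $\mathcal C$ of subsets of $\Omega^\sigma_X\mathsf V$ if for all $K,L\in\mathcal C$, with closures in $\Omega^\sigma_X\mathsf V$, $\overline{KL}=\overline K\,\overline L$ and $\overline{L^+}=\langle\overline L\rangle_\sigma$ (the $\sigma$-subalgebra generated by $\overline L$). $\mathsf V$ is $\sigma$-PR if for every finite $X$ this holds for the class of all sets $p_{\mathsf V}(L)$ with $L\subseteq X^+$ rational, and strongly $\sigma$-PR if for every finite $X$ it holds for the class of all rational subsets of $\Omega^\sigma_X\mathsf V$. $\mathsf V$ is full with respect to a class $\mathcal C$ of subsets of $\Omega^\sigma_X\mathsf S$ if $p_{\mathsf V}(\overline L)=\overline{p_{\mathsf V}(L)}$ for all $L\in\mathcal C$ (left closure in $\Omega^\sigma_X\mathsf S$, right closure in $\Omega^\sigma_X\mathsf V$);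 $\mathsf V$ is $\sigma$-full if for every finite $X$ it is full with respect to the set of rational languages of $X^+$, and strongly $\sigma$-full if for every finite $X$ it is full with respect to all rational subsets of $\Omega^\sigma_X\mathsf S$. *)

theory Defs
  imports Main "HOL-Library.FuncSet"
begin

type_synonym sgr = "nat set \<times> (nat \<Rightarrow> nat \<Rightarrow> nat)"

abbreviation car :: "sgr \<Rightarrow> nat set" where "car S \<equiv> fst S"
abbreviation mul :: "sgr \<Rightarrow> nat \<Rightarrow> nat \<Rightarrow> nat" where "mul S \<equiv> snd S"

text \<open>The pseudovariety S of all finite (nonempty) semigroups; every finite semigroup is
 isomorphic to one of these.\<close>
definition Sall :: "sgr set" where
  "Sall = {S. finite (car S) \<and> car S \<noteq> {}
             \<and> (\<forall>a\<in>car S. \<forall>b\<in>car S. mul S a b \<in> car S)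
             \<and> (\<forall>a\<in>car S. \<forall>b\<in>car S. \<forall>c\<in>car S. mul S (mul S a b) c = mul S a (mul S b c))}"

definition shom :: "sgr \<Rightarrow> sgr \<Rightarrow> (nat \<Rightarrow> nat) \<Rightarrow> bool" where
  "shom S T h \<longleftrightarrow> (\<forall>a\<in>car S. h a \<in> car T) \<and>
     (\<forall>a\<in>car S. \<forall>b\<in>car S. h (mul S a b) = mul T (h a) (h b))"

definition pseudovariety :: "sgr set \<Rightarrow> bool" where
  "pseudovariety V \<longleftrightarrow> V \<subseteq> Sall
   \<and> (\<forall>T\<in>Sall. card (car T) = 1 \<longrightarrow> T \<in> V)
   \<and> (\<forall>S\<in>V. \<forall>T\<in>Sall. car T \<subseteq> car S \<and> (\<forall>a\<in>car T. \<forall>b\<in>car T. mul T a b = mul S a b) \<longrightarrow> T \<in> V)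
   \<and> (\<forall>S\<in>V. \<forall>T\<in>Sall. \<forall>h. shom S T h \<and> h ` car S = car T \<longrightarrow> T \<in> V)
   \<and> (\<forall>S1\<in>V. \<forall>S2\<in>V. \<forall>T\<in>Sall. \<forall>f.
        bij_betw f (car T) (car S1 \<times> car S2) \<and>
        (\<forall>a\<in>car T. \<forall>b\<in>car T. f (mul T a b) =
            (mul S1 (fst (f a)) (fst (f b)), mul S2 (snd (f a)) (snd (f b)))) \<longrightarrow> T \<in> V)"

text \<open>An A-ary implicit operation on V: a family (S,phi) |-> w S phi, for S in V and
 phi : A -> S, commuting with all homomorphisms between members of V.\<close>
type_synonym elt = "sgr \<Rightarrow> (nat \<Rightarrow> nat) \<Rightarrow> nat"

definition impl_op :: "sgr set \<Rightarrow> nat set \<Rightarrow> elt \<Rightarrow> bool" where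
  "impl_op V A w \<longleftrightarrow>
     (\<forall>S \<phi>. \<not> (S \<in> V \<and> \<phi> \<in> A \<rightarrow>\<^sub>E car S) \<longrightarrow> w S \<phi> = undefined)
   \<and> (\<forall>S\<in>V. \<forall>\<phi>\<in>A \<rightarrow>\<^sub>E car S. w S \<phi> \<in> car S)
   \<and> (\<forall>S\<in>V. \<forall>T\<in>V. \<forall>h. shom S T h \<longrightarrow>
        (\<forall>\<phi>\<in>A \<rightarrow>\<^sub>E car S. h (w S \<phi>) = w T (restrict (h \<circ> \<phi>) A)))"

text \<open>The free pro-V semigroup on X, realised as the X-ary implicit operations on V.\<close>
definition Omega_bar :: "sgr set \<Rightarrow> nat set \<Rightarrow> elt set" where
  "Omega_bar V X = {w. impl_op V X w}"

definition dom_pts :: "sgr set \<Rightarrow> nat set \<Rightarrow> (sgr \<times> (nat \<Rightarrow> nat)) set" where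
  "dom_pts V X = {(S, \<phi>). S \<in> V \<and> \<phi> \<in> X \<rightarrow>\<^sub>E car S}"

definition gen :: "sgr set \<Rightarrow> nat set \<Rightarrow> nat \<Rightarrow> elt" where
  "gen V X x = (\<lambda>S \<phi>. if (S, \<phi>) \<in> dom_pts V X then \<phi> x else undefined)"

definition emult :: "sgr set \<Rightarrow> nat set \<Rightarrow> elt \<Rightarrow> elt \<Rightarrow> elt" where
  "emult V X u v = (\<lambda>S \<phi>. if (S, \<phi>) \<in> dom_pts V X then mul S (u S \<phi>) (v S \<phi>) else undefined)"

definition apply_op :: "sgr set \<Rightarrow> nat set \<Rightarrow> nat \<Rightarrow> elt \<Rightarrow> (nat \<Rightarrow> elt) \<Rightarrow> elt" where
  "apply_op V X n w us = (\<lambda>S \<phi>. if (S, \<phi>) \<in> dom_pts V X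
        then w S (\<lambda>i\<in>{..<n}. us i S \<phi>) else undefined)"

definition mult_op :: elt where
  "mult_op = (\<lambda>S \<phi>. if S \<in> Sall \<and> \<phi> \<in> {..<2::nat} \<rightarrow>\<^sub>E car S then mul S (\<phi> 0) (\<phi> 1) else undefined)"

definition implicit_signature :: "(nat \<times> elt) set \<Rightarrow> bool" where
  "implicit_signature \<sigma> \<longleftrightarrow> (\<forall>(n, w)\<in>\<sigma>. impl_op Sall {..<n} w) \<and> (2, mult_op) \<in> \<sigma>"

inductive_set sig_gen :: "sgr set \<Rightarrow> nat set \<Rightarrow> (nat \<times> elt) set \<Rightarrow> elt set \<Rightarrow> elt set"
  for V X \<sigma> G where
  base: "u \<in> G \<Longrightarrow> u \<in> sig_gen V X \<sigma> G"
| op: "(n, w) \<in> \<sigma> \<Longrightarrow> (\<forall>i<n. us i \<in> sig_gen V X \<sigma> G) \<Longrightarrow> apply_op V X n w us \<in> sig_gen V X \<sigma> G"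

definition Omega_sig :: "(nat \<times> elt) set \<Rightarrow> sgr set \<Rightarrow> nat set \<Rightarrow> elt set" where
  "Omega_sig \<sigma> V X = sig_gen V X \<sigma> (gen V X ` X)"

text \<open>Closure in Omega_bar V X (pointwise / profinite topology), and in Omega_sig.\<close>
definition pcl :: "sgr set \<Rightarrow> nat set \<Rightarrow> elt set \<Rightarrow> elt set" where
  "pcl V X L = {w \<in> Omega_bar V X. \<forall>F. finite F \<and> F \<subseteq> dom_pts V X \<longrightarrow>
                   (\<exists>u\<in>L. \<forall>(S, \<phi>)\<in>F. u S \<phi> = w S \<phi>)}"

definition scl :: "(nat \<times> elt) set \<Rightarrow> sgr set \<Rightarrow> nat set \<Rightarrow> elt set \<Rightarrow> elt set" where
  "scl \<sigma> V X L = pcl V X L \<inter> Omega_sig \<sigma> V X"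

definition pV :: "sgr set \<Rightarrow> elt \<Rightarrow> elt" where
  "pV V w = (\<lambda>S \<phi>. if S \<in> V then w S \<phi> else undefined)"

definition setmul :: "('m \<Rightarrow> 'm \<Rightarrow> 'm) \<Rightarrow> 'm set \<Rightarrow> 'm set \<Rightarrow> 'm set" where
  "setmul m K L = {m a b | a b. a \<in> K \<and> b \<in> L}"

inductive_set splus :: "('m \<Rightarrow> 'm \<Rightarrow> 'm) \<Rightarrow> 'm set \<Rightarrow> 'm set" for m K where
  base: "a \<in> K \<Longrightarrow> a \<in> splus m K"
| step: "a \<in> splus m K \<Longrightarrow> b \<in> splus m K \<Longrightarrow> m a b \<in> splus m K"

inductive_set rat_sets :: "'m set \<Rightarrow> ('m \<Rightarrow> 'm \<Rightarrow> 'm) \<Rightarrow> 'm set set" for M m where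
  fin: "finite K \<Longrightarrow> K \<subseteq> M \<Longrightarrow> K \<in> rat_sets M m"
| un: "K \<in> rat_sets M m \<Longrightarrow> L \<in> rat_sets M m \<Longrightarrow> K \<union> L \<in> rat_sets M m"
| prod: "K \<in> rat_sets M m \<Longrightarrow> L \<in> rat_sets M m \<Longrightarrow> setmul m K L \<in> rat_sets M m"
| plus: "K \<in> rat_sets M m \<Longrightarrow> splus m K \<in> rat_sets M m"

definition rat_langs :: "nat set \<Rightarrow> nat list set set" where
  "rat_langs X = rat_sets {xs. xs \<noteq> [] \<and> set xs \<subseteq> X} (@)"

fun word_elt :: "sgr set \<Rightarrow> nat set \<Rightarrow> nat list \<Rightarrow> elt" where
  "word_elt V X [] = undefined"
| "word_elt V X [x] = gen V X x"
| "word_elt V X (x # y # ys) = emult V X (gen V X x) (word_elt V X (y # ys))"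

definition PR_class :: "(nat \<times> elt) set \<Rightarrow> sgr set \<Rightarrow> nat set \<Rightarrow> elt set set \<Rightarrow> bool" where
  "PR_class \<sigma> V X C \<longleftrightarrow> (\<forall>K\<in>C. \<forall>L\<in>C.
      scl \<sigma> V X (setmul (emult V X) K L) = setmul (emult V X) (scl \<sigma> V X K) (scl \<sigma> V X L)
    \<and> scl \<sigma> V X (splus (emult V X) L) = sig_gen V X \<sigma> (scl \<sigma> V X L))"

definition sigma_PR :: "(nat \<times> elt) set \<Rightarrow> sgr set \<Rightarrow> bool" where
  "sigma_PR \<sigma> V \<longleftrightarrow> (\<forall>X. finite X \<longrightarrow>
     PR_class \<sigma> V X {pV V ` (word_elt Sall X ` L) | L. L \<in> rat_langs X})"

definition strongly_sigma_PR :: "(nat \<times> elt) set \<Rightarrow> sgr set \<Rightarrow> bool" where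
  "strongly_sigma_PR \<sigma> V \<longleftrightarrow> (\<forall>X. finite X \<longrightarrow>
     PR_class \<sigma> V X (rat_sets (Omega_sig \<sigma> V X) (emult V X)))"

definition full_wrt :: "(nat \<times> elt) set \<Rightarrow> sgr set \<Rightarrow> nat set \<Rightarrow> elt set set \<Rightarrow> bool" where
  "full_wrt \<sigma> V X C \<longleftrightarrow> (\<forall>L\<in>C. pV V ` scl \<sigma> Sall X L = scl \<sigma> V X (pV V ` L))"

definition sigma_full :: "(nat \<times> elt) set \<Rightarrow> sgr set \<Rightarrow> bool" where
  "sigma_full \<sigma> V \<longleftrightarrow> (\<forall>X. finite X \<longrightarrow>
     full_wrt \<sigma> V X {word_elt Sall X ` L | L. L \<in> rat_langs X})"

definition strongly_sigma_full :: "(nat \<times> elt) set \<Rightarrow> sgr set \<Rightarrow> bool" where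
  "strongly_sigma_full \<sigma> V \<longleftrightarrow> (\<forall>X. finite X \<longrightarrow>
     full_wrt \<sigma> V X (rat_sets (Omega_sig \<sigma> Sall X) (emult Sall X)))"

end

theory Submission
  imports Defs
begin

lemma V_sub: "pseudovariety V \<Longrightarrow> V \<subseteq> Sall"
  by (simp add: pseudovariety_def)

lemma gen_impl:
  assumes "V \<subseteq> Sall" "x \<in> X"
  shows "impl_op V X (gen V X x)"
  unfolding impl_op_def gen_def dom_pts_def
proof (intro conjI ballI allI impI)
  fix S \<phi> assume "\<not> (S \<in> V \<and> \<phi> \<in> X \<rightarrow>\<^sub>E car S)"
  then show "(if (S, \<phi>) \<in> {(S, \<phi>). S \<in> V \<and> \<phi> \<in> X \<rightarrow>\<^sub>E car S} then \<phi> x else undefined) = undefined" by auto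
next
  fix S \<phi> assume "S \<in> V" "\<phi> \<in> X \<rightarrow>\<^sub>E car S"
  then show "(if (S, \<phi>) \<in> {(S, \<phi>). S \<in> V \<and> \<phi> \<in> X \<rightarrow>\<^sub>E car S} then \<phi> x else undefined) \<in> car S"
    using assms by auto
next
  fix S T h \<phi> assume h: "S \<in> V" "T \<in> V" "shom S T h" "\<phi> \<in> X \<rightarrow>\<^sub>E car S"
  have "restrict (h \<circ> \<phi>) X \<in> X \<rightarrow>\<^sub>E car T" using h unfolding shom_def by auto
  then show "h (if (S, \<phi>) \<in> {(S, \<phi>). S \<in> V \<and> \<phi> \<in> X \<rightarrow>\<^sub>E car S} then \<phi> x else undefined) =
       (if (T, restrict (h \<circ> \<phi>) X) \<in> {(S, \<phi>). S \<in> V \<and> \<phi> \<in> X \<rightarrow>\<^sub>E car S} then restrict (h \<circ> \<phi>) X x else undefined)"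
    using h assms by auto
qed

lemma apply_impl:
  assumes "V \<subseteq> Sall" "impl_op Sall {..<n} w" "\<forall>i<n. impl_op V X (us i)"
  shows "impl_op V X (apply_op V X n w us)"
  unfolding impl_op_def
proof (intro conjI ballI allI impI)
  fix S \<phi> assume "\<not> (S \<in> V \<and> \<phi> \<in> X \<rightarrow>\<^sub>E car S)"
  then show "apply_op V X n w us S \<phi> = undefined" by (auto simp: apply_op_def dom_pts_def)
next
  fix S \<phi> assume s: "S \<in> V" "\<phi> \<in> X \<rightarrow>\<^sub>E car S"
  have "(\<lambda>i\<in>{..<n}. us i S \<phi>) \<in> {..<n} \<rightarrow>\<^sub>E car S"
    using assms(3) s unfolding impl_op_def by auto
  then show "apply_op V X n w us S \<phi> \<in> car S"
    using s assms(1,2) unfolding apply_op_def dom_pts_def impl_op_def by auto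
next
  fix S T h \<phi> assume h: "S \<in> V" "T \<in> V" "shom S T h" "\<phi> \<in> X \<rightarrow>\<^sub>E car S"
  have T: "restrict (h \<circ> \<phi>) X \<in> X \<rightarrow>\<^sub>E car T" using h unfolding shom_def by auto
  have arg: "(\<lambda>i\<in>{..<n}. us i S \<phi>) \<in> {..<n} \<rightarrow>\<^sub>E car S"
    using assms(3) h unfolding impl_op_def by auto
  have eq: "restrict (h \<circ> (\<lambda>i\<in>{..<n}. us i S \<phi>)) {..<n} = (\<lambda>i\<in>{..<n}. us i T (restrict (h \<circ> \<phi>) X))"
    using assms(3) h unfolding impl_op_def by (auto intro!: ext)
  have "h (w S (\<lambda>i\<in>{..<n}. us i S \<phi>)) = w T (restrict (h \<circ> (\<lambda>i\<in>{..<n}. us i S \<phi>)) {..<n})"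
    using assms(1,2) h arg unfolding impl_op_def by blast
  then show "h (apply_op V X n w us S \<phi>) = apply_op V X n w us T (restrict (h \<circ> \<phi>) X)"
    using h T eq unfolding apply_op_def dom_pts_def by auto
qed

lemma sig_impl:
  assumes "V \<subseteq> Sall" "implicit_signature \<sigma>" "u \<in> Omega_sig \<sigma> V X"
  shows "u \<in> Omega_bar V X"
  using assms(3) unfolding Omega_sig_def Omega_bar_def
proof (induction rule: sig_gen.induct)
  case (base u) then show ?case using gen_impl[OF assms(1)] by auto
next
  case (op n w us)
  have "impl_op Sall {..<n} w" using op(1) assms(2) unfolding implicit_signature_def by auto
  then show ?case using apply_impl[OF assms(1)] op by auto
qed

lemma omega_vals:
  assumes "u \<in> Omega_bar V X" "(S, \<phi>) \<in> dom_pts V X"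
  shows "u S \<phi> \<in> car S"
  using assms unfolding Omega_bar_def impl_op_def dom_pts_def by auto

lemma omega_undef:
  assumes "u \<in> Omega_bar V X" "(S, \<phi>) \<notin> dom_pts V X"
  shows "u S \<phi> = undefined"
proof -
  have "\<not> (S \<in> V \<and> \<phi> \<in> X \<rightarrow>\<^sub>E car S)" using assms(2) by (auto simp: dom_pts_def)
  then show ?thesis using assms(1) unfolding Omega_bar_def impl_op_def by blast
qed

lemma emult_apply:
  assumes "V \<subseteq> Sall" "u \<in> Omega_bar V X" "v \<in> Omega_bar V X"
  shows "emult V X u v = apply_op V X 2 mult_op (\<lambda>i. if i = 0 then u else v)"
proof (intro ext)
  fix S \<phi>
  show "emult V X u v S \<phi> = apply_op V X 2 mult_op (\<lambda>i. if i = 0 then u else v) S \<phi>"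
  proof (cases "(S, \<phi>) \<in> dom_pts V X")
    case True
    then have "S \<in> Sall" using assms(1) by (auto simp: dom_pts_def)
    moreover have "(\<lambda>i\<in>{..<2::nat}. (if i = 0 then u else v) S \<phi>) \<in> {..<2} \<rightarrow>\<^sub>E car S"
      using omega_vals[OF assms(2) True] omega_vals[OF assms(3) True] by auto
    ultimately show ?thesis using True unfolding emult_def apply_op_def mult_op_def by auto
  next
    case False then show ?thesis unfolding emult_def apply_op_def by auto
  qed
qed

lemma sig_emult:
  assumes "V \<subseteq> Sall" "implicit_signature \<sigma>" "u \<in> Omega_sig \<sigma> V X" "v \<in> Omega_sig \<sigma> V X"
  shows "emult V X u v \<in> Omega_sig \<sigma> V X"
proof -
  have "emult V X u v = apply_op V X 2 mult_op (\<lambda>i. if i = 0 then u else v)"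
    using emult_apply assms sig_impl by blast
  moreover have "(2, mult_op) \<in> \<sigma>" using assms(2) by (simp add: implicit_signature_def)
  ultimately show ?thesis using assms(3,4) unfolding Omega_sig_def
    by (auto intro: sig_gen.op)
qed


lemma pV_impl:
  assumes "V \<subseteq> Sall" "u \<in> Omega_bar Sall X"
  shows "pV V u \<in> Omega_bar V X"
proof -
  have u: "impl_op Sall X u" using assms(2) by (simp add: Omega_bar_def)
  have "impl_op V X (pV V u)"
    unfolding impl_op_def
  proof (intro conjI allI impI ballI)
    fix S \<phi> assume a: "\<not> (S \<in> V \<and> \<phi> \<in> X \<rightarrow>\<^sub>E car S)"
    show "pV V u S \<phi> = undefined"
    proof (cases "S \<in> V")
      case True
      have "\<not> (S \<in> Sall \<and> \<phi> \<in> X \<rightarrow>\<^sub>E car S)" using a True by blast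
      then have "u S \<phi> = undefined" using u unfolding impl_op_def by blast
      then show ?thesis unfolding pV_def by simp
    qed (simp add: pV_def)
  next
    fix S \<phi> assume "S \<in> V" "\<phi> \<in> X \<rightarrow>\<^sub>E car S"
    then show "pV V u S \<phi> \<in> car S" using u assms(1) unfolding impl_op_def pV_def by auto
  next
    fix S T h \<phi> assume st: "S \<in> V" "T \<in> V" "shom S T h" "\<phi> \<in> X \<rightarrow>\<^sub>E car S"
    have st2: "S \<in> Sall" "T \<in> Sall" using st(1,2) assms(1) by blast+
    have "\<forall>S\<in>Sall. \<forall>T\<in>Sall. \<forall>h. shom S T h \<longrightarrow>
        (\<forall>\<phi>\<in>X \<rightarrow>\<^sub>E car S. h (u S \<phi>) = u T (restrict (h \<circ> \<phi>) X))"
      using u unfolding impl_op_def by blast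
    then have "h (u S \<phi>) = u T (restrict (h \<circ> \<phi>) X)" using st st2 by blast
    then show "h (pV V u S \<phi>) = pV V u T (restrict (h \<circ> \<phi>) X)"
      using st unfolding pV_def by simp
  qed
  then show ?thesis by (simp add: Omega_bar_def)
qed

lemma pV_gen: "V \<subseteq> Sall \<Longrightarrow> pV V (gen Sall X x) = gen V X x"
  unfolding pV_def gen_def dom_pts_def by (auto intro!: ext)

lemma pV_apply: "V \<subseteq> Sall \<Longrightarrow> pV V (apply_op Sall X n w us) = apply_op V X n w (\<lambda>i. pV V (us i))"
  unfolding pV_def apply_op_def dom_pts_def by (auto intro!: ext)

lemma pV_emult: "V \<subseteq> Sall \<Longrightarrow> pV V (emult Sall X u v) = emult V X (pV V u) (pV V v)"
  unfolding pV_def emult_def dom_pts_def by (auto intro!: ext)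

lemma pV_sig_gen:
  assumes "V \<subseteq> Sall" "u \<in> sig_gen Sall X \<sigma> G"
  shows "pV V u \<in> sig_gen V X \<sigma> (pV V ` G)"
  using assms(2)
proof (induction rule: sig_gen.induct)
  case (base u) then show ?case by (auto intro: sig_gen.base)
next
  case (op n w us) then show ?case by (auto simp: pV_apply[OF assms(1)] intro: sig_gen.op)
qed

lemma pV_sig:
  assumes "V \<subseteq> Sall" "u \<in> Omega_sig \<sigma> Sall X"
  shows "pV V u \<in> Omega_sig \<sigma> V X"
proof -
  have "pV V ` (gen Sall X ` X) = gen V X ` X" using pV_gen[OF assms(1)] by (auto simp: image_image)
  then show ?thesis using pV_sig_gen[OF assms(1), of u X \<sigma> "gen Sall X ` X"] assms(2)
    unfolding Omega_sig_def by simp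
qed

lemma dom_pts_mono: "V \<subseteq> Sall \<Longrightarrow> dom_pts V X \<subseteq> dom_pts Sall X"
  unfolding dom_pts_def by auto

lemma claimA:
  assumes "V \<subseteq> Sall"
  shows "pV V ` scl \<sigma> Sall X L \<subseteq> scl \<sigma> V X (pV V ` L)"
proof
  fix y assume "y \<in> pV V ` scl \<sigma> Sall X L"
  then obtain w where y: "y = pV V w" and w: "w \<in> pcl Sall X L" "w \<in> Omega_sig \<sigma> Sall X"
    unfolding scl_def by auto
  have wb: "w \<in> Omega_bar Sall X" using w unfolding pcl_def by auto
  have "y \<in> pcl V X (pV V ` L)"
    unfolding pcl_def
  proof (intro CollectI conjI allI impI)
    show "y \<in> Omega_bar V X" using y pV_impl[OF assms wb] by simp
    fix F assume F: "finite F \<and> F \<subseteq> dom_pts V X"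
    then have "finite F \<and> F \<subseteq> dom_pts Sall X" using dom_pts_mono[OF assms] by auto
    then obtain u where u: "u \<in> L" "\<forall>(S, \<phi>)\<in>F. u S \<phi> = w S \<phi>" using w(1) unfolding pcl_def by blast
    have "\<forall>(S, \<phi>)\<in>F. pV V u S \<phi> = y S \<phi>"
      using u(2) F y unfolding pV_def dom_pts_def by auto
    then show "\<exists>u\<in>pV V ` L. \<forall>(S, \<phi>)\<in>F. u S \<phi> = y S \<phi>" using u(1) by blast
  qed
  moreover have "y \<in> Omega_sig \<sigma> V X" using pV_sig[OF assms w(2)] y by simp
  ultimately show "y \<in> scl \<sigma> V X (pV V ` L)" unfolding scl_def by auto
qed

lemma pcl_mono: "A \<subseteq> B \<Longrightarrow> pcl V X A \<subseteq> pcl V X B"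
  unfolding pcl_def by blast

lemma scl_mono: "A \<subseteq> B \<Longrightarrow> scl \<sigma> V X A \<subseteq> scl \<sigma> V X B"
  unfolding scl_def using pcl_mono by blast

lemma pcl_alt: "pcl V X L = {w \<in> Omega_bar V X. \<forall>F. finite F \<and> F \<subseteq> dom_pts V X \<longrightarrow>
                   (\<exists>u\<in>L. \<forall>q\<in>F. u (fst q) (snd q) = w (fst q) (snd q))}"
  unfolding pcl_def by (simp add: case_prod_beta)

lemma pclD: "w \<in> pcl V X L \<Longrightarrow> finite F \<Longrightarrow> F \<subseteq> dom_pts V X \<Longrightarrow>
   \<exists>u\<in>L. \<forall>q\<in>F. u (fst q) (snd q) = w (fst q) (snd q)"
  unfolding pcl_alt by blast

lemma pclI: "w \<in> Omega_bar V X \<Longrightarrow> (\<And>F. finite F \<Longrightarrow> F \<subseteq> dom_pts V X \<Longrightarrow>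
   \<exists>u\<in>L. \<forall>q\<in>F. u (fst q) (snd q) = w (fst q) (snd q)) \<Longrightarrow> w \<in> pcl V X L"
  unfolding pcl_alt by blast

lemma pcl_omega: "w \<in> pcl V X L \<Longrightarrow> w \<in> Omega_bar V X"
  unfolding pcl_def by blast

lemma pcl_union: "pcl V X (A \<union> B) \<subseteq> pcl V X A \<union> pcl V X B"
proof
  fix w assume w: "w \<in> pcl V X (A \<union> B)"
  show "w \<in> pcl V X A \<union> pcl V X B"
  proof (rule ccontr)
    assume nw: "w \<notin> pcl V X A \<union> pcl V X B"
    have wo: "w \<in> Omega_bar V X" using w by (rule pcl_omega)
    obtain F1 where F1: "finite F1" "F1 \<subseteq> dom_pts V X" "\<not>(\<exists>u\<in>A. \<forall>q\<in>F1. u (fst q) (snd q) = w (fst q) (snd q))"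
      using nw pclI[OF wo, of A] by blast
    obtain F2 where F2: "finite F2" "F2 \<subseteq> dom_pts V X" "\<not>(\<exists>u\<in>B. \<forall>q\<in>F2. u (fst q) (snd q) = w (fst q) (snd q))"
      using nw pclI[OF wo, of B] by blast
    obtain u where "u \<in> A \<union> B" "\<forall>q\<in>F1 \<union> F2. u (fst q) (snd q) = w (fst q) (snd q)"
      using pclD[OF w, of "F1 \<union> F2"] F1(1,2) F2(1,2) by blast
    then show False using F1(3) F2(3) by blast
  qed
qed

lemma scl_union: "scl \<sigma> V X (A \<union> B) \<subseteq> scl \<sigma> V X A \<union> scl \<sigma> V X B"
  unfolding scl_def using pcl_union[of V X A B] by auto

lemma pcl_mult:
  assumes "u \<in> pcl V X A" "v \<in> pcl V X B" "emult V X u v \<in> Omega_bar V X"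
  shows "emult V X u v \<in> pcl V X (setmul (emult V X) A B)"
  unfolding pcl_def
proof (intro CollectI conjI allI impI)
  show "emult V X u v \<in> Omega_bar V X" by fact
  fix F assume F: "finite F \<and> F \<subseteq> dom_pts V X"
  obtain u' where u': "u' \<in> A" "\<forall>(S, \<phi>)\<in>F. u' S \<phi> = u S \<phi>" using assms(1) F unfolding pcl_def by blast
  obtain v' where v': "v' \<in> B" "\<forall>(S, \<phi>)\<in>F. v' S \<phi> = v S \<phi>" using assms(2) F unfolding pcl_def by blast
  have "\<forall>(S, \<phi>)\<in>F. emult V X u' v' S \<phi> = emult V X u v S \<phi>"
  proof (intro ballI)
    fix q assume q: "q \<in> F"
    obtain S \<phi> where q': "q = (S, \<phi>)" by fastforce
    have "u' S \<phi> = u S \<phi>" "v' S \<phi> = v S \<phi>" using u'(2) v'(2) q q' by auto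
    then show "case q of (S, \<phi>) \<Rightarrow> emult V X u' v' S \<phi> = emult V X u v S \<phi>"
      using q' unfolding emult_def by simp
  qed
  moreover have "emult V X u' v' \<in> setmul (emult V X) A B" using u' v' unfolding setmul_def by blast
  ultimately show "\<exists>z\<in>setmul (emult V X) A B. \<forall>(S, \<phi>)\<in>F. z S \<phi> = emult V X u v S \<phi>" by blast
qed

lemma pcl_self: "u \<in> Omega_bar V X \<Longrightarrow> u \<in> A \<Longrightarrow> u \<in> pcl V X A"
  unfolding pcl_def by blast

lemma omega_eq:
  assumes "u \<in> Omega_bar V X" "v \<in> Omega_bar V X" "\<forall>(S, \<phi>)\<in>dom_pts V X. u S \<phi> = v S \<phi>"
  shows "u = v"
proof (intro ext)
  fix S \<phi> show "u S \<phi> = v S \<phi>"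
    using assms omega_undef[OF assms(1)] omega_undef[OF assms(2)] by (cases "(S,\<phi>) \<in> dom_pts V X") auto
qed

lemma pcl_finite:
  assumes "finite K" "w \<in> pcl V X K" "K \<subseteq> Omega_bar V X"
  shows "w \<in> K"
proof (rule ccontr)
  assume nk: "w \<notin> K"
  have wb: "w \<in> Omega_bar V X" using assms(2) by (rule pcl_omega)
  have "\<forall>k\<in>K. \<exists>d\<in>dom_pts V X. k (fst d) (snd d) \<noteq> w (fst d) (snd d)"
  proof
    fix k assume k: "k \<in> K"
    show "\<exists>d\<in>dom_pts V X. k (fst d) (snd d) \<noteq> w (fst d) (snd d)"
    proof (rule ccontr)
      assume "\<not> ?thesis"
      then have "\<forall>(S, \<phi>)\<in>dom_pts V X. k S \<phi> = w S \<phi>" by auto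
      then have "k = w" using omega_eq[of k V X w] k assms(3) wb by blast
      then show False using k nk by simp
    qed
  qed
  then obtain d where d: "\<forall>k\<in>K. d k \<in> dom_pts V X \<and> k (fst (d k)) (snd (d k)) \<noteq> w (fst (d k)) (snd (d k))"
    by metis
  have "finite (d ` K)" "d ` K \<subseteq> dom_pts V X" using d assms(1) by auto
  then obtain u where u: "u \<in> K" "\<forall>q\<in>d ` K. u (fst q) (snd q) = w (fst q) (snd q)"
    using pclD[OF assms(2)] by blast
  then have "u (fst (d u)) (snd (d u)) = w (fst (d u)) (snd (d u))" by blast
  then show False using d u(1) by blast
qed


lemma Sall_closed: "S \<in> Sall \<Longrightarrow> a \<in> car S \<Longrightarrow> b \<in> car S \<Longrightarrow> mul S a b \<in> car S"
  unfolding Sall_def by blast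

lemma Sall_assoc: "S \<in> Sall \<Longrightarrow> a \<in> car S \<Longrightarrow> b \<in> car S \<Longrightarrow> c \<in> car S \<Longrightarrow>
   mul S (mul S a b) c = mul S a (mul S b c)"
  unfolding Sall_def by blast

lemma no_nullary:
  assumes "impl_op Sall {..<0} w"
  shows False
proof -
  define S0 :: sgr where "S0 = ({0}, \<lambda>a b. a)"
  define S1 :: sgr where "S1 = ({1}, \<lambda>a b. a)"
  define S2 :: sgr where "S2 = ({0,1}, \<lambda>a b. a)"
  have ins: "S0 \<in> Sall" "S1 \<in> Sall" "S2 \<in> Sall" unfolding S0_def S1_def S2_def Sall_def by auto
  define e :: "nat \<Rightarrow> nat" where "e = (\<lambda>_. undefined)"
  have e: "\<And>S. e \<in> {..<0::nat} \<rightarrow>\<^sub>E car S" unfolding e_def by auto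
  have r: "restrict (id \<circ> e) {..<0::nat} = e" unfolding e_def by auto
  have h0: "shom S0 S2 id" "shom S1 S2 id" unfolding shom_def S0_def S1_def S2_def by auto
  have H: "\<forall>S\<in>Sall. \<forall>T\<in>Sall. \<forall>h. shom S T h \<longrightarrow>
        (\<forall>\<phi>\<in>{..<0} \<rightarrow>\<^sub>E car S. h (w S \<phi>) = w T (restrict (h \<circ> \<phi>) {..<0}))"
    using assms unfolding impl_op_def by (elim conjE) assumption
  have C: "\<forall>S\<in>Sall. \<forall>\<phi>\<in>{..<0} \<rightarrow>\<^sub>E car S. w S \<phi> \<in> car S"
    using assms unfolding impl_op_def by (elim conjE) assumption
  have "id (w S0 e) = w S2 (restrict (id \<circ> e) {..<0})"
    using H ins h0 e by blast
  moreover have "id (w S1 e) = w S2 (restrict (id \<circ> e) {..<0})"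
    using H ins h0 e by blast
  moreover have "w S0 e \<in> car S0" "w S1 e \<in> car S1" using C ins e by blast+
  ultimately show False unfolding S0_def S1_def by simp
qed

lemma splus_sub1:
  assumes "K \<subseteq> car P" "\<forall>a\<in>car P. \<forall>b\<in>car P. mul P a b \<in> car P" "x \<in> splus (mul P) K"
  shows "x \<in> car P"
  using assms(3) by (induction rule: splus.induct) (use assms(1,2) in auto)

lemma splus_sub: "K \<subseteq> car P \<Longrightarrow> \<forall>a\<in>car P. \<forall>b\<in>car P. mul P a b \<in> car P \<Longrightarrow> splus (mul P) K \<subseteq> car P"
  using splus_sub1 by blast

lemma subsemi:
  assumes "P \<in> Sall" "n > 0" "\<psi> \<in> {..<n} \<rightarrow>\<^sub>E car P" "impl_op Sall {..<n} w"
  shows "w P \<psi> \<in> splus (mul P) (\<psi> ` {..<n})"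
proof -
  define T :: sgr where "T = (splus (mul P) (\<psi> ` {..<n}), mul P)"
  have sub: "car T \<subseteq> car P" unfolding T_def using splus_sub[of "\<psi> ` {..<n}" P] assms(1,3)
    unfolding Sall_def by auto
  have "\<psi> 0 \<in> car T" using assms(2) unfolding T_def by (auto intro: splus.base)
  then have ne: "car T \<noteq> {}" by auto
  have "T \<in> Sall" unfolding Sall_def
  proof (intro CollectI conjI)
    show "finite (car T)" using sub assms(1) unfolding Sall_def by (auto intro: finite_subset)
    show "car T \<noteq> {}" by fact
    show "\<forall>a\<in>car T. \<forall>b\<in>car T. mul T a b \<in> car T" unfolding T_def by (auto intro: splus.step)
    show "\<forall>a\<in>car T. \<forall>b\<in>car T. \<forall>c\<in>car T. mul T (mul T a b) c = mul T a (mul T b c)"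
    proof (intro ballI)
      fix a b c assume "a \<in> car T" "b \<in> car T" "c \<in> car T"
      then have "a \<in> car P" "b \<in> car P" "c \<in> car P" using sub by auto
      then show "mul T (mul T a b) c = mul T a (mul T b c)" using assms(1) unfolding Sall_def T_def by auto
    qed
  qed
  have hom: "shom T P id" unfolding shom_def T_def using sub unfolding T_def by auto
  have psiT: "\<psi> \<in> {..<n} \<rightarrow>\<^sub>E car T" using assms(3) unfolding T_def by (auto intro: splus.base)
  have r: "restrict (id \<circ> \<psi>) {..<n} = \<psi>" using assms(3) by (auto simp: PiE_def extensional_def)
  have "id (w T \<psi>) = w P (restrict (id \<circ> \<psi>) {..<n})"
    using assms(4) \<open>T \<in> Sall\<close> assms(1) hom psiT unfolding impl_op_def by blast
  moreover have "w T \<psi> \<in> car T" using assms(4) \<open>T \<in> Sall\<close> psiT unfolding impl_op_def by blast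
  ultimately show ?thesis using r unfolding T_def by simp
qed

lemma product_constr:
  assumes "finite F" "F \<subseteq> dom_pts Sall X"
  shows "\<exists>P \<psi>0. P \<in> Sall \<and> \<psi>0 \<in> X \<rightarrow>\<^sub>E car P \<and>
           (\<forall>q\<in>F. \<exists>\<pi>. shom P (fst q) \<pi> \<and> restrict (\<pi> \<circ> \<psi>0) X = snd q)"
proof -
  define Tup where "Tup = (\<Pi>\<^sub>E q\<in>F. car (fst q))"
  have Fs: "\<And>q. q \<in> F \<Longrightarrow> fst q \<in> Sall \<and> snd q \<in> X \<rightarrow>\<^sub>E car (fst q)"
  proof -
    fix q assume "q \<in> F"
    then have "q \<in> dom_pts Sall X" using assms(2) by auto
    moreover obtain S \<phi> where "q = (S, \<phi>)" by fastforce
    ultimately show "fst q \<in> Sall \<and> snd q \<in> X \<rightarrow>\<^sub>E car (fst q)" unfolding dom_pts_def by simp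
  qed
  have fin: "finite Tup" unfolding Tup_def using assms(1) Fs by (intro finite_PiE) (auto simp: Sall_def)
  have ne: "Tup \<noteq> {}" unfolding Tup_def using Fs by (auto simp: PiE_eq_empty_iff Sall_def)
  obtain enc :: "(sgr \<times> (nat \<Rightarrow> nat) \<Rightarrow> nat) \<Rightarrow> nat" where "bij_betw enc Tup {0..<card Tup}"
    using ex_bij_betw_finite_nat[OF fin] by blast
  then have inj: "inj_on enc Tup" by (rule bij_betw_imp_inj_on)
  define dec where "dec = inv_into Tup enc"
  have de: "\<And>t. t \<in> Tup \<Longrightarrow> dec (enc t) = t" unfolding dec_def using inj by simp
  have dT: "\<And>a. a \<in> enc ` Tup \<Longrightarrow> dec a \<in> Tup" unfolding dec_def by (auto simp: inv_into_into)
  have ed: "\<And>a. a \<in> enc ` Tup \<Longrightarrow> enc (dec a) = a" unfolding dec_def by (simp add: f_inv_into_f)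
  define pm where "pm = (\<lambda>t s. \<lambda>q\<in>F. mul (fst q) (t q) (s q))"
  have pmT: "\<And>t s. t \<in> Tup \<Longrightarrow> s \<in> Tup \<Longrightarrow> pm t s \<in> Tup"
  proof -
    fix t s assume ts: "t \<in> Tup" "s \<in> Tup"
    show "pm t s \<in> Tup" unfolding pm_def Tup_def
    proof (rule PiE_I)
      fix q assume q: "q \<in> F"
      have "t q \<in> car (fst q)" "s q \<in> car (fst q)" using ts q unfolding Tup_def by auto
      then show "(\<lambda>q\<in>F. mul (fst q) (t q) (s q)) q \<in> car (fst q)"
        using q Fs[OF q] Sall_closed by simp
    qed auto
  qed
  define P :: sgr where "P = (enc ` Tup, \<lambda>a b. enc (pm (dec a) (dec b)))"
  define \<psi>0 where "\<psi>0 = (\<lambda>x\<in>X. enc (\<lambda>q\<in>F. snd q x))"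
  have P: "P \<in> Sall" unfolding Sall_def
  proof (intro CollectI conjI)
    show "finite (car P)" unfolding P_def using fin by simp
    show "car P \<noteq> {}" unfolding P_def using ne by simp
    show cl: "\<forall>a\<in>car P. \<forall>b\<in>car P. mul P a b \<in> car P" unfolding P_def using dT pmT by auto
    show "\<forall>a\<in>car P. \<forall>b\<in>car P. \<forall>c\<in>car P. mul P (mul P a b) c = mul P a (mul P b c)"
    proof (intro ballI)
      fix a b c assume abc: "a \<in> car P" "b \<in> car P" "c \<in> car P"
      then have t: "dec a \<in> Tup" "dec b \<in> Tup" "dec c \<in> Tup" unfolding P_def using dT by auto
      have "pm (pm (dec a) (dec b)) (dec c) = pm (dec a) (pm (dec b) (dec c))"
      proof (intro ext)
        fix q show "pm (pm (dec a) (dec b)) (dec c) q = pm (dec a) (pm (dec b) (dec c)) q"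
        proof (cases "q \<in> F")
          case True
          have "dec a q \<in> car (fst q)" "dec b q \<in> car (fst q)" "dec c q \<in> car (fst q)"
            using t True unfolding Tup_def by auto
          then show ?thesis using True Fs[OF True] Sall_assoc Sall_closed unfolding pm_def by simp
        qed (simp add: pm_def)
      qed
      then show "mul P (mul P a b) c = mul P a (mul P b c)"
        unfolding P_def using t pmT de by simp
    qed
  qed
  have psi: "\<psi>0 \<in> X \<rightarrow>\<^sub>E car P"
  proof -
    have "\<And>x. x \<in> X \<Longrightarrow> (\<lambda>q\<in>F. snd q x) \<in> Tup" unfolding Tup_def using Fs by auto
    then show ?thesis unfolding \<psi>0_def P_def by auto
  qed
  have "\<forall>q\<in>F. \<exists>\<pi>. shom P (fst q) \<pi> \<and> restrict (\<pi> \<circ> \<psi>0) X = snd q"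
  proof
    fix q assume q: "q \<in> F"
    define \<pi> where "\<pi> = (\<lambda>a. dec a q)"
    have "shom P (fst q) \<pi>" unfolding shom_def
    proof (intro conjI ballI)
      fix a assume "a \<in> car P"
      then have "dec a \<in> Tup" using dT unfolding P_def by simp
      then show "\<pi> a \<in> car (fst q)"
        unfolding \<pi>_def Tup_def using q by auto
    next
      fix a b assume ab: "a \<in> car P" "b \<in> car P"
      then have "dec a \<in> Tup" "dec b \<in> Tup" unfolding P_def using dT by auto
      then show "\<pi> (mul P a b) = mul (fst q) (\<pi> a) (\<pi> b)"
        unfolding \<pi>_def P_def using de pmT q by (simp add: pm_def)
    qed
    moreover have "restrict (\<pi> \<circ> \<psi>0) X = snd q"
    proof (intro ext)
      fix x show "restrict (\<pi> \<circ> \<psi>0) X x = snd q x"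
      proof (cases "x \<in> X")
        case True
        have "(\<lambda>q\<in>F. snd q x) \<in> Tup" unfolding Tup_def using Fs True by auto
        then show ?thesis using True q de unfolding \<pi>_def \<psi>0_def by simp
      next
        case False then show ?thesis using Fs[OF q] by (auto simp: PiE_def extensional_def)
      qed
    qed
    ultimately show "\<exists>\<pi>. shom P (fst q) \<pi> \<and> restrict (\<pi> \<circ> \<psi>0) X = snd q" by blast
  qed
  then show ?thesis using P psi by blast
qed


lemma impl_opD:
  assumes "impl_op V A w"
  shows "\<And>S \<phi>. S \<in> V \<Longrightarrow> \<phi> \<in> A \<rightarrow>\<^sub>E car S \<Longrightarrow> w S \<phi> \<in> car S"
    and "\<And>S T h \<phi>. S \<in> V \<Longrightarrow> T \<in> V \<Longrightarrow> shom S T h \<Longrightarrow> \<phi> \<in> A \<rightarrow>\<^sub>E car S \<Longrightarrow>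
           h (w S \<phi>) = w T (restrict (h \<circ> \<phi>) A)"
  using assms unfolding impl_op_def by blast+

lemma splus_in:
  assumes "K \<subseteq> D" "\<forall>a\<in>D. \<forall>b\<in>D. m a b \<in> D" "x \<in> splus m K"
  shows "x \<in> D"
  using assms(3) by (induction rule: splus.induct) (use assms(1,2) in auto)

lemma splus_splus:
  assumes "x \<in> splus m K" "K \<subseteq> splus m L"
  shows "x \<in> splus m L"
  using assms(1) by (induction rule: splus.induct) (use assms(2) in \<open>auto intro: splus.step\<close>)

lemma realize:
  assumes "e \<in> splus (mul P) (\<psi> ` {..<n})"
    and "\<And>i. i < n \<Longrightarrow> u' i \<in> M \<and> u' i P \<psi>0 = \<psi> i"
    and "\<forall>a\<in>M. \<forall>b\<in>M. emult Sall X a b \<in> M"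
    and "(P, \<psi>0) \<in> dom_pts Sall X"
  shows "\<exists>v\<in>M. v P \<psi>0 = e"
  using assms(1)
proof (induction rule: splus.induct)
  case (base a)
  then obtain i where "i < n" "a = \<psi> i" by auto
  then show ?case using assms(2) by metis
next
  case (step a b)
  then obtain v1 v2 where "v1 \<in> M" "v1 P \<psi>0 = a" "v2 \<in> M" "v2 P \<psi>0 = b" by blast
  then show ?case using assms(3,4) by (intro bexI[of _ "emult Sall X v1 v2"]) (auto simp: emult_def)
qed

lemma hard:
  assumes sig: "implicit_signature \<sigma>" and nw: "(n, w) \<in> \<sigma>"
    and M: "M \<subseteq> Omega_bar Sall X" "\<forall>a\<in>M. \<forall>b\<in>M. emult Sall X a b \<in> M"
    and us: "\<forall>i<n. us i \<in> pcl Sall X M"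
    and F: "finite F" "F \<subseteq> dom_pts Sall X"
  shows "\<exists>u\<in>M. \<forall>q\<in>F. u (fst q) (snd q) = apply_op Sall X n w us (fst q) (snd q)"
proof -
  have wi: "impl_op Sall {..<n} w" using sig nw unfolding implicit_signature_def by auto
  have npos: "n > 0" using no_nullary wi by (cases n) auto
  obtain P \<psi>0 where P: "P \<in> Sall" "\<psi>0 \<in> X \<rightarrow>\<^sub>E car P"
    and prj: "\<forall>q\<in>F. \<exists>\<pi>. shom P (fst q) \<pi> \<and> restrict (\<pi> \<circ> \<psi>0) X = snd q"
    using product_constr[OF F] by blast
  have Pd: "(P, \<psi>0) \<in> dom_pts Sall X" using P unfolding dom_pts_def by simp
  define F' where "F' = insert (P, \<psi>0) F"
  have F': "finite F'" "F' \<subseteq> dom_pts Sall X" unfolding F'_def using F Pd by auto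
  have "\<forall>i. \<exists>u. i < n \<longrightarrow> u \<in> M \<and> (\<forall>q\<in>F'. u (fst q) (snd q) = us i (fst q) (snd q))"
  proof
    fix i show "\<exists>u. i < n \<longrightarrow> u \<in> M \<and> (\<forall>q\<in>F'. u (fst q) (snd q) = us i (fst q) (snd q))"
    proof (cases "i < n")
      case True
      then have "us i \<in> pcl Sall X M" using us by blast
      from pclD[OF this F'] show ?thesis by blast
    qed simp
  qed
  then obtain u' where u': "\<And>i. i < n \<Longrightarrow> u' i \<in> M \<and> (\<forall>q\<in>F'. u' i (fst q) (snd q) = us i (fst q) (snd q))"
    by (metis (no_types))
  define \<psi> where "\<psi> = (\<lambda>i\<in>{..<n}. u' i P \<psi>0)"
  have psi: "\<psi> \<in> {..<n} \<rightarrow>\<^sub>E car P"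
    unfolding \<psi>_def using u' M(1) omega_vals[OF _ Pd] by auto
  have "w P \<psi> \<in> splus (mul P) (\<psi> ` {..<n})" using subsemi[OF P(1) npos psi wi] .
  moreover have "\<And>i. i < n \<Longrightarrow> u' i \<in> M \<and> u' i P \<psi>0 = \<psi> i"
  proof -
    fix i assume i: "i < n"
    then show "u' i \<in> M \<and> u' i P \<psi>0 = \<psi> i" using u'[OF i] unfolding \<psi>_def by simp
  qed
  ultimately obtain v where v: "v \<in> M" "v P \<psi>0 = w P \<psi>"
    using realize[of "w P \<psi>" P \<psi> n u' M \<psi>0 X] M(2) Pd by blast
  have vi: "impl_op Sall X v" using v(1) M(1) unfolding Omega_bar_def by auto
  have "\<forall>q\<in>F. v (fst q) (snd q) = apply_op Sall X n w us (fst q) (snd q)"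
  proof
    fix q assume q: "q \<in> F"
    obtain \<pi> where pi: "shom P (fst q) \<pi>" "restrict (\<pi> \<circ> \<psi>0) X = snd q" using prj q by blast
    have qd: "q \<in> dom_pts Sall X" using q F by auto
    then have S: "fst q \<in> Sall" unfolding dom_pts_def by auto
    have "v (fst q) (snd q) = \<pi> (v P \<psi>0)"
      using impl_opD(2)[OF vi P(1) S pi(1) P(2)] pi(2) by simp
    also have "\<dots> = w (fst q) (restrict (\<pi> \<circ> \<psi>) {..<n})"
      using v(2) impl_opD(2)[OF wi P(1) S pi(1) psi] by simp
    also have "restrict (\<pi> \<circ> \<psi>) {..<n} = (\<lambda>i\<in>{..<n}. us i (fst q) (snd q))"
    proof (intro ext)
      fix i show "restrict (\<pi> \<circ> \<psi>) {..<n} i = (\<lambda>i\<in>{..<n}. us i (fst q) (snd q)) i"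
      proof (cases "i < n")
        case True
        have ui: "impl_op Sall X (u' i)" using u'[OF True] M(1) unfolding Omega_bar_def by auto
        have "\<pi> (u' i P \<psi>0) = u' i (fst q) (snd q)"
          using impl_opD(2)[OF ui P(1) S pi(1) P(2)] pi(2) by simp
        also have "\<dots> = us i (fst q) (snd q)" using u'[OF True] q unfolding F'_def by auto
        finally show ?thesis using True unfolding \<psi>_def by simp
      qed simp
    qed
    finally show "v (fst q) (snd q) = apply_op Sall X n w us (fst q) (snd q)"
      using qd unfolding apply_op_def by (simp add: case_prod_beta restrict_def)
  qed
  then show ?thesis using v(1) by blast
qed


lemma sig_gen_mono:
  assumes "G \<subseteq> H" "u \<in> sig_gen V X \<sigma> G"
  shows "u \<in> sig_gen V X \<sigma> H"
  using assms(2)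
proof (induction rule: sig_gen.induct)
  case (base u) then show ?case using assms(1) by (auto intro: sig_gen.base)
next
  case (op n w us) then show ?case by (auto intro: sig_gen.op)
qed

lemma apply_op_cong:
  assumes "\<And>i. i < n \<Longrightarrow> us i = us' i"
  shows "apply_op V X n w us = apply_op V X n w us'"
proof -
  have "\<And>S \<phi>. (\<lambda>i\<in>{..<n}. us i S \<phi>) = (\<lambda>i\<in>{..<n}. us' i S \<phi>)"
    using assms by (intro restrict_ext) simp
  then show ?thesis unfolding apply_op_def by (simp only:)
qed

lemma pV_sig_gen_img:
  assumes "V \<subseteq> Sall" "u \<in> sig_gen V X \<sigma> (pV V ` G)"
  shows "u \<in> pV V ` sig_gen Sall X \<sigma> G"
  using assms(2)
proof (induction rule: sig_gen.induct)
  case (base u) then show ?case by (auto intro: sig_gen.base)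
next
  case (op n w us)
  have "\<forall>i. \<exists>u'. i < n \<longrightarrow> u' \<in> sig_gen Sall X \<sigma> G \<and> us i = pV V u'"
    using op(2) by blast
  then obtain us' where us': "\<And>i. i < n \<Longrightarrow> us' i \<in> sig_gen Sall X \<sigma> G \<and> us i = pV V (us' i)"
    by (metis (no_types))
  have "apply_op V X n w us = apply_op V X n w (\<lambda>i. pV V (us' i))"
    using us' by (intro apply_op_cong) simp
  also have "\<dots> = pV V (apply_op Sall X n w us')" using pV_apply[OF assms(1)] by simp
  finally have e: "apply_op V X n w us = pV V (apply_op Sall X n w us')" .
  have "apply_op Sall X n w us' \<in> sig_gen Sall X \<sigma> G" using op(1) us' by (auto intro: sig_gen.op)
  then show ?case using e by blast
qed

lemma splus_sig:
  assumes "implicit_signature \<sigma>" "A \<subseteq> Omega_sig \<sigma> Sall X"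
  shows "splus (emult Sall X) A \<subseteq> Omega_sig \<sigma> Sall X"
  using splus_in[OF assms(2)] sig_emult[of Sall \<sigma>] assms(1) by blast

lemma sig_gen_clS:
  assumes sig: "implicit_signature \<sigma>" and A: "A \<subseteq> Omega_sig \<sigma> Sall X"
    and u: "u \<in> sig_gen Sall X \<sigma> (scl \<sigma> Sall X A)"
  shows "u \<in> scl \<sigma> Sall X (splus (emult Sall X) A)"
  using u
proof (induction rule: sig_gen.induct)
  case (base u)
  have "A \<subseteq> splus (emult Sall X) A" by (auto intro: splus.base)
  then show ?case using base scl_mono by blast
next
  case (op n w us)
  define M where "M = splus (emult Sall X) A"
  have Ms: "M \<subseteq> Omega_sig \<sigma> Sall X" unfolding M_def using splus_sig[OF sig A] .
  have Mb: "M \<subseteq> Omega_bar Sall X" using Ms sig_impl[of Sall \<sigma>] sig by blast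
  have Mc: "\<forall>a\<in>M. \<forall>b\<in>M. emult Sall X a b \<in> M" unfolding M_def by (auto intro: splus.step)
  have usc: "\<forall>i<n. us i \<in> scl \<sigma> Sall X M" using op(2) unfolding M_def by blast
  then have uss: "\<forall>i<n. us i \<in> Omega_sig \<sigma> Sall X" and usp: "\<forall>i<n. us i \<in> pcl Sall X M"
    unfolding scl_def by auto
  have as: "apply_op Sall X n w us \<in> Omega_sig \<sigma> Sall X"
    using op(1) uss unfolding Omega_sig_def by (auto intro: sig_gen.op)
  have ab: "apply_op Sall X n w us \<in> Omega_bar Sall X" using sig_impl[of Sall \<sigma>] sig as by blast
  have "apply_op Sall X n w us \<in> pcl Sall X M"
    using pclI[OF ab] hard[OF sig op(1) Mb Mc usp] by blast
  then show ?case using as unfolding scl_def M_def by blast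
qed

lemma img_setmul:
  assumes "\<forall>a\<in>K. \<forall>b\<in>L. f (m a b) = m' (f a) (f b)"
  shows "f ` setmul m K L = setmul m' (f ` K) (f ` L)"
  using assms unfolding setmul_def by (auto simp: image_iff) (metis)

lemma img_splus:
  assumes "K \<subseteq> D" "\<forall>a\<in>D. \<forall>b\<in>D. m a b \<in> D" "\<forall>a\<in>D. \<forall>b\<in>D. f (m a b) = m' (f a) (f b)"
  shows "f ` splus m K = splus m' (f ` K)"
proof
  show "f ` splus m K \<subseteq> splus m' (f ` K)"
  proof
    fix y assume "y \<in> f ` splus m K"
    then obtain x where x: "x \<in> splus m K" "y = f x" by blast
    have "f x \<in> splus m' (f ` K)" using x(1)
    proof (induction rule: splus.induct)
      case (base a) then show ?case by (auto intro: splus.base)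
    next
      case (step a b)
      have "a \<in> D" "b \<in> D" using splus_in[OF assms(1,2)] step(1,2) by auto
      then show ?case using step assms(3) by (auto intro: splus.step)
    qed
    then show "y \<in> splus m' (f ` K)" using x by simp
  qed
next
  show "splus m' (f ` K) \<subseteq> f ` splus m K"
  proof
    fix y assume "y \<in> splus m' (f ` K)"
    then show "y \<in> f ` splus m K"
    proof (induction rule: splus.induct)
      case (base a) then show ?case by (auto intro: splus.base)
    next
      case (step a b)
      then obtain x1 x2 where x: "x1 \<in> splus m K" "a = f x1" "x2 \<in> splus m K" "b = f x2" by blast
      have "x1 \<in> D" "x2 \<in> D" using splus_in[OF assms(1,2)] x by auto
      then have "m' a b = f (m x1 x2)" using x assms(3) by simp
      moreover have "m x1 x2 \<in> splus m K" using x by (auto intro: splus.step)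
      ultimately show ?case by blast
    qed
  qed
qed

lemma step_fin:
  assumes V: "V \<subseteq> Sall" and sig: "implicit_signature \<sigma>"
    and K: "finite K" "K \<subseteq> Omega_sig \<sigma> Sall X"
  shows "scl \<sigma> V X (pV V ` K) \<subseteq> pV V ` scl \<sigma> Sall X K"
proof
  fix w assume "w \<in> scl \<sigma> V X (pV V ` K)"
  then have w: "w \<in> pcl V X (pV V ` K)" unfolding scl_def by blast
  have Kb: "K \<subseteq> Omega_bar Sall X" using K(2) sig_impl[of Sall \<sigma>] sig by blast
  have "pV V ` K \<subseteq> Omega_bar V X" using Kb pV_impl[OF V] by blast
  then have "w \<in> pV V ` K" using pcl_finite[OF _ w] K(1) by blast
  then obtain k where k: "k \<in> K" "w = pV V k" by blast
  have "k \<in> scl \<sigma> Sall X K" using k(1) Kb K(2) pcl_self[of k Sall X K] unfolding scl_def by blast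
  then show "w \<in> pV V ` scl \<sigma> Sall X K" using k by blast
qed

lemma step_un:
  assumes "scl \<sigma> V X (pV V ` A) \<subseteq> pV V ` scl \<sigma> Sall X A"
    "scl \<sigma> V X (pV V ` B) \<subseteq> pV V ` scl \<sigma> Sall X B"
  shows "scl \<sigma> V X (pV V ` (A \<union> B)) \<subseteq> pV V ` scl \<sigma> Sall X (A \<union> B)"
proof -
  have "scl \<sigma> V X (pV V ` (A \<union> B)) \<subseteq> scl \<sigma> V X (pV V ` A) \<union> scl \<sigma> V X (pV V ` B)"
    using scl_union[of \<sigma> V X "pV V ` A" "pV V ` B"] by (simp add: image_Un)
  also have "\<dots> \<subseteq> pV V ` scl \<sigma> Sall X A \<union> pV V ` scl \<sigma> Sall X B" using assms by blast
  also have "\<dots> \<subseteq> pV V ` scl \<sigma> Sall X (A \<union> B)"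
    using scl_mono[of A "A \<union> B" \<sigma> Sall X] scl_mono[of B "A \<union> B" \<sigma> Sall X] by blast
  finally show ?thesis .
qed

lemma step_prod:
  assumes V: "V \<subseteq> Sall" and sig: "implicit_signature \<sigma>"
    and IA: "scl \<sigma> V X (pV V ` A) \<subseteq> pV V ` scl \<sigma> Sall X A"
    and IB: "scl \<sigma> V X (pV V ` B) \<subseteq> pV V ` scl \<sigma> Sall X B"
    and PR: "scl \<sigma> V X (setmul (emult V X) (pV V ` A) (pV V ` B))
             = setmul (emult V X) (scl \<sigma> V X (pV V ` A)) (scl \<sigma> V X (pV V ` B))"
  shows "scl \<sigma> V X (pV V ` setmul (emult Sall X) A B) \<subseteq> pV V ` scl \<sigma> Sall X (setmul (emult Sall X) A B)"
proof
  fix y assume y: "y \<in> scl \<sigma> V X (pV V ` setmul (emult Sall X) A B)"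
  have "pV V ` setmul (emult Sall X) A B = setmul (emult V X) (pV V ` A) (pV V ` B)"
    using pV_emult[OF V] by (intro img_setmul) simp
  then have "y \<in> setmul (emult V X) (scl \<sigma> V X (pV V ` A)) (scl \<sigma> V X (pV V ` B))" using y PR by simp
  then obtain a b where ab: "y = emult V X a b" "a \<in> scl \<sigma> V X (pV V ` A)" "b \<in> scl \<sigma> V X (pV V ` B)"
    unfolding setmul_def by blast
  obtain a' b' where a': "a' \<in> scl \<sigma> Sall X A" "a = pV V a'" and b': "b' \<in> scl \<sigma> Sall X B" "b = pV V b'"
    using ab IA IB by blast
  have s: "a' \<in> Omega_sig \<sigma> Sall X" "b' \<in> Omega_sig \<sigma> Sall X" using a' b' unfolding scl_def by auto
  have es: "emult Sall X a' b' \<in> Omega_sig \<sigma> Sall X" using sig_emult[of Sall \<sigma> a' X b'] sig s by simp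
  have eb: "emult Sall X a' b' \<in> Omega_bar Sall X" using sig_impl[of Sall \<sigma>] sig es by blast
  have "emult Sall X a' b' \<in> pcl Sall X (setmul (emult Sall X) A B)"
    using pcl_mult[OF _ _ eb] a'(1) b'(1) unfolding scl_def by blast
  then have "emult Sall X a' b' \<in> scl \<sigma> Sall X (setmul (emult Sall X) A B)" using es unfolding scl_def by blast
  moreover have "y = pV V (emult Sall X a' b')" using ab(1) a'(2) b'(2) pV_emult[OF V] by simp
  ultimately show "y \<in> pV V ` scl \<sigma> Sall X (setmul (emult Sall X) A B)" by blast
qed

lemma step_plus:
  assumes V: "V \<subseteq> Sall" and sig: "implicit_signature \<sigma>" and A: "A \<subseteq> Omega_sig \<sigma> Sall X"
    and IA: "scl \<sigma> V X (pV V ` A) \<subseteq> pV V ` scl \<sigma> Sall X A"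
    and PR: "scl \<sigma> V X (splus (emult V X) (pV V ` A)) = sig_gen V X \<sigma> (scl \<sigma> V X (pV V ` A))"
  shows "scl \<sigma> V X (pV V ` splus (emult Sall X) A) \<subseteq> pV V ` scl \<sigma> Sall X (splus (emult Sall X) A)"
proof
  fix y assume y: "y \<in> scl \<sigma> V X (pV V ` splus (emult Sall X) A)"
  have "pV V ` splus (emult Sall X) A = splus (emult V X) (pV V ` A)"
    using pV_emult[OF V] by (intro img_splus[of A UNIV]) auto
  then have "y \<in> sig_gen V X \<sigma> (scl \<sigma> V X (pV V ` A))" using y PR by simp
  then have "y \<in> sig_gen V X \<sigma> (pV V ` scl \<sigma> Sall X A)" using sig_gen_mono[OF IA] by blast
  then have "y \<in> pV V ` sig_gen Sall X \<sigma> (scl \<sigma> Sall X A)" using pV_sig_gen_img[OF V] by blast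
  then show "y \<in> pV V ` scl \<sigma> Sall X (splus (emult Sall X) A)" using sig_gen_clS[OF sig A] by blast
qed


lemma rat_sub:
  assumes "L \<in> rat_sets M m" "\<forall>a\<in>M. \<forall>b\<in>M. m a b \<in> M"
  shows "L \<subseteq> M"
  using assms(1)
proof (induction rule: rat_sets.induct)
  case (prod K L) then show ?case using assms(2) unfolding setmul_def by blast
next
  case (plus K) then show ?case using splus_in[OF _ assms(2)] by blast
qed auto

lemma pV_rat:
  assumes V: "V \<subseteq> Sall" and L: "L \<in> rat_sets (Omega_sig \<sigma> Sall X) (emult Sall X)"
  shows "pV V ` L \<in> rat_sets (Omega_sig \<sigma> V X) (emult V X)"
  using L
proof (induction rule: rat_sets.induct)
  case (fin K) then show ?case using pV_sig[OF V] by (intro rat_sets.fin) auto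
next
  case (un K L) then show ?case by (simp add: image_Un rat_sets.un)
next
  case (prod K L)
  have "pV V ` setmul (emult Sall X) K L = setmul (emult V X) (pV V ` K) (pV V ` L)"
    using pV_emult[OF V] by (intro img_setmul) simp
  then show ?case using prod by (simp add: rat_sets.prod)
next
  case (plus K)
  have "pV V ` splus (emult Sall X) K = splus (emult V X) (pV V ` K)"
    using pV_emult[OF V] by (intro img_splus[of K UNIV]) auto
  then show ?case using plus by (simp add: rat_sets.plus)
qed

lemma core2:
  assumes V: "V \<subseteq> Sall" and sig: "implicit_signature \<sigma>"
    and PR: "PR_class \<sigma> V X (rat_sets (Omega_sig \<sigma> V X) (emult V X))"
    and L: "L \<in> rat_sets (Omega_sig \<sigma> Sall X) (emult Sall X)"
  shows "scl \<sigma> V X (pV V ` L) \<subseteq> pV V ` scl \<sigma> Sall X L"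
  using L
proof (induction rule: rat_sets.induct)
  case (fin K) then show ?case using step_fin[OF V sig] by blast
next
  case (un K L) then show ?case using step_un by blast
next
  case (prod K L)
  have "pV V ` K \<in> rat_sets (Omega_sig \<sigma> V X) (emult V X)" "pV V ` L \<in> rat_sets (Omega_sig \<sigma> V X) (emult V X)"
    using pV_rat[OF V] prod(1,2) by blast+
  then have "scl \<sigma> V X (setmul (emult V X) (pV V ` K) (pV V ` L))
             = setmul (emult V X) (scl \<sigma> V X (pV V ` K)) (scl \<sigma> V X (pV V ` L))"
    using PR unfolding PR_class_def by blast
  then show ?case using step_prod[OF V sig prod(3,4)] by blast
next
  case (plus K)
  have "pV V ` K \<in> rat_sets (Omega_sig \<sigma> V X) (emult V X)" using pV_rat[OF V] plus(1) by blast
  then have "scl \<sigma> V X (splus (emult V X) (pV V ` K)) = sig_gen V X \<sigma> (scl \<sigma> V X (pV V ` K))"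
    using PR unfolding PR_class_def by blast
  moreover have "K \<subseteq> Omega_sig \<sigma> Sall X"
    using rat_sub[OF plus(1)] sig_emult[of Sall \<sigma>] sig by blast
  ultimately show ?case using step_plus[OF V sig _ plus(2)] by blast
qed

lemma emult_assoc:
  assumes "u \<in> Omega_bar Sall X" "v \<in> Omega_bar Sall X" "z \<in> Omega_bar Sall X"
  shows "emult Sall X (emult Sall X u v) z = emult Sall X u (emult Sall X v z)"
proof (intro ext)
  fix S \<phi>
  show "emult Sall X (emult Sall X u v) z S \<phi> = emult Sall X u (emult Sall X v z) S \<phi>"
  proof (cases "(S, \<phi>) \<in> dom_pts Sall X")
    case True
    then have "S \<in> Sall" unfolding dom_pts_def by auto
    then show ?thesis using True omega_vals[OF assms(1) True] omega_vals[OF assms(2) True]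
        omega_vals[OF assms(3) True] Sall_assoc unfolding emult_def by simp
  qed (simp add: emult_def)
qed

lemma gen_sig: "x \<in> X \<Longrightarrow> gen V X x \<in> Omega_sig \<sigma> V X"
  unfolding Omega_sig_def by (auto intro: sig_gen.base)

lemma word_sig:
  assumes sig: "implicit_signature \<sigma>"
  shows "xs \<noteq> [] \<Longrightarrow> set xs \<subseteq> X \<Longrightarrow> word_elt Sall X xs \<in> Omega_sig \<sigma> Sall X"
proof (induction xs)
  case (Cons x xs)
  show ?case
  proof (cases xs)
    case Nil then show ?thesis using Cons gen_sig by simp
  next
    case (Cons y ys)
    have "word_elt Sall X xs \<in> Omega_sig \<sigma> Sall X" using Cons.IH Cons.prems Cons by simp
    moreover have "gen Sall X x \<in> Omega_sig \<sigma> Sall X" using Cons.prems gen_sig by simp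
    ultimately show ?thesis using Cons sig_emult[of Sall \<sigma>] sig by simp
  qed
qed simp

lemma word_app:
  assumes sig: "implicit_signature \<sigma>"
  shows "xs \<noteq> [] \<Longrightarrow> set xs \<subseteq> X \<Longrightarrow> ys \<noteq> [] \<Longrightarrow> set ys \<subseteq> X \<Longrightarrow>
    word_elt Sall X (xs @ ys) = emult Sall X (word_elt Sall X xs) (word_elt Sall X ys)"
proof (induction xs)
  case (Cons x xs)
  show ?case
  proof (cases xs)
    case Nil then show ?thesis using Cons.prems by (cases ys) auto
  next
    case (Cons y zs)
    have b: "\<And>ws. ws \<noteq> [] \<Longrightarrow> set ws \<subseteq> X \<Longrightarrow> word_elt Sall X ws \<in> Omega_bar Sall X"
      using word_sig[OF sig] sig_impl[of Sall \<sigma>] sig by blast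
    have g: "gen Sall X x \<in> Omega_bar Sall X" using Cons.prems gen_impl[of Sall x X] by (simp add: Omega_bar_def)
    have "word_elt Sall X ((x # xs) @ ys) = emult Sall X (gen Sall X x) (word_elt Sall X (xs @ ys))"
      using Cons by simp
    also have "\<dots> = emult Sall X (gen Sall X x) (emult Sall X (word_elt Sall X xs) (word_elt Sall X ys))"
      using Cons.IH Cons.prems Cons by simp
    also have "\<dots> = emult Sall X (emult Sall X (gen Sall X x) (word_elt Sall X xs)) (word_elt Sall X ys)"
      using emult_assoc[OF g b b, of xs ys] Cons.prems Cons by simp
    also have "\<dots> = emult Sall X (word_elt Sall X (x # xs)) (word_elt Sall X ys)" using Cons by simp
    finally show ?thesis .
  qed
qed simp


lemma words_closed: "\<forall>a\<in>{xs. xs \<noteq> [] \<and> set xs \<subseteq> X}. \<forall>b\<in>{xs. xs \<noteq> [] \<and> set xs \<subseteq> X}.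
    a @ b \<in> {xs. xs \<noteq> [] \<and> set xs \<subseteq> X}"
  by auto

lemma PR_prod: "PR_class \<sigma> V X C \<Longrightarrow> K \<in> C \<Longrightarrow> L \<in> C \<Longrightarrow>
  scl \<sigma> V X (setmul (emult V X) K L) = setmul (emult V X) (scl \<sigma> V X K) (scl \<sigma> V X L)"
  unfolding PR_class_def by blast

lemma PR_plus: "PR_class \<sigma> V X C \<Longrightarrow> L \<in> C \<Longrightarrow>
  scl \<sigma> V X (splus (emult V X) L) = sig_gen V X \<sigma> (scl \<sigma> V X L)"
  unfolding PR_class_def by blast

lemma inC: "K \<in> rat_langs X \<Longrightarrow> pV V ` word_elt Sall X ` K \<in> {pV V ` (word_elt Sall X ` L) | L. L \<in> rat_langs X}"
  by blast

lemma core1: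
  assumes V: "V \<subseteq> Sall" and sig: "implicit_signature \<sigma>"
    and PR: "PR_class \<sigma> V X {pV V ` (word_elt Sall X ` L) | L. L \<in> rat_langs X}"
    and L: "L \<in> rat_sets {xs. xs \<noteq> [] \<and> set xs \<subseteq> X} (@)"
  shows "scl \<sigma> V X (pV V ` word_elt Sall X ` L) \<subseteq> pV V ` scl \<sigma> Sall X (word_elt Sall X ` L)"
  using L
proof (induction rule: rat_sets.induct)
  case (fin K)
  have "word_elt Sall X ` K \<subseteq> Omega_sig \<sigma> Sall X" using fin(2) word_sig[OF sig] by blast
  then show ?case using step_fin[OF V sig] fin(1) by blast
next
  case (un K L) then show ?case using step_un[of \<sigma> V X "word_elt Sall X ` K" "word_elt Sall X ` L"]
    by (simp add: image_Un)
next
  case (prod K L)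
  have KL: "K \<subseteq> {xs. xs \<noteq> [] \<and> set xs \<subseteq> X}" "L \<subseteq> {xs. xs \<noteq> [] \<and> set xs \<subseteq> X}"
    using rat_sub[OF prod(1) words_closed] rat_sub[OF prod(2) words_closed] by auto
  have img: "word_elt Sall X ` setmul (@) K L = setmul (emult Sall X) (word_elt Sall X ` K) (word_elt Sall X ` L)"
  proof (intro img_setmul ballI)
    fix a b assume "a \<in> K" "b \<in> L"
    then have ab: "a \<noteq> []" "set a \<subseteq> X" "b \<noteq> []" "set b \<subseteq> X" using KL by auto
    show "word_elt Sall X (a @ b) = emult Sall X (word_elt Sall X a) (word_elt Sall X b)"
      by (rule word_app[OF sig ab])
  qed
  have "K \<in> rat_langs X" "L \<in> rat_langs X" using prod(1,2) unfolding rat_langs_def by simp_all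
  then have "scl \<sigma> V X (setmul (emult V X) (pV V ` word_elt Sall X ` K) (pV V ` word_elt Sall X ` L))
     = setmul (emult V X) (scl \<sigma> V X (pV V ` word_elt Sall X ` K)) (scl \<sigma> V X (pV V ` word_elt Sall X ` L))"
    using PR_prod[OF PR inC inC] by simp
  then show ?case using step_prod[OF V sig prod(3,4)] img by simp
next
  case (plus K)
  have K: "K \<subseteq> {xs. xs \<noteq> [] \<and> set xs \<subseteq> X}" using rat_sub[OF plus(1) words_closed] by auto
  have img: "word_elt Sall X ` splus (@) K = splus (emult Sall X) (word_elt Sall X ` K)"
    using K word_app[OF sig] by (intro img_splus[of K "{xs. xs \<noteq> [] \<and> set xs \<subseteq> X}"]) auto
  have "K \<in> rat_langs X" using plus(1) unfolding rat_langs_def by simp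
  then have "scl \<sigma> V X (splus (emult V X) (pV V ` word_elt Sall X ` K)) = sig_gen V X \<sigma> (scl \<sigma> V X (pV V ` word_elt Sall X ` K))"
    using PR_plus[OF PR inC] by simp
  moreover have "word_elt Sall X ` K \<subseteq> Omega_sig \<sigma> Sall X" using K word_sig[OF sig] by blast
  ultimately show ?case using step_plus[OF V sig _ plus(2)] img by simp
qed

theorem corollary4p2:
  assumes "implicit_signature \<sigma>" and "pseudovariety V"
  shows "(sigma_PR \<sigma> V \<longrightarrow> sigma_full \<sigma> V)
       \<and> (strongly_sigma_PR \<sigma> V \<longrightarrow> strongly_sigma_full \<sigma> V)"
proof (intro conjI impI)
  have V: "V \<subseteq> Sall" using V_sub[OF assms(2)] .
  assume PR: "sigma_PR \<sigma> V"
  show "sigma_full \<sigma> V" unfolding sigma_full_def full_wrt_def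
  proof (intro allI impI ballI)
    fix X :: "nat set" and A assume X: "finite X" and A: "A \<in> {word_elt Sall X ` L | L. L \<in> rat_langs X}"
    then obtain L where L: "L \<in> rat_langs X" "A = word_elt Sall X ` L" by blast
    have "PR_class \<sigma> V X {pV V ` (word_elt Sall X ` L) | L. L \<in> rat_langs X}"
      using PR X unfolding sigma_PR_def by blast
    then have "scl \<sigma> V X (pV V ` A) \<subseteq> pV V ` scl \<sigma> Sall X A"
      using core1[OF V assms(1)] L unfolding rat_langs_def by blast
    then show "pV V ` scl \<sigma> Sall X A = scl \<sigma> V X (pV V ` A)" using claimA[OF V] by blast
  qed
next
  have V: "V \<subseteq> Sall" using V_sub[OF assms(2)] .
  assume PR: "strongly_sigma_PR \<sigma> V"
  show "strongly_sigma_full \<sigma> V" unfolding strongly_sigma_full_def full_wrt_def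
  proof (intro allI impI ballI)
    fix X :: "nat set" and A assume X: "finite X" and A: "A \<in> rat_sets (Omega_sig \<sigma> Sall X) (emult Sall X)"
    have "PR_class \<sigma> V X (rat_sets (Omega_sig \<sigma> V X) (emult V X))"
      using PR X unfolding strongly_sigma_PR_def by blast
    then have "scl \<sigma> V X (pV V ` A) \<subseteq> pV V ` scl \<sigma> Sall X A"
      using core2[OF V assms(1) _ A] by blast
    then show "pV V ` scl \<sigma> Sall X A = scl \<sigma> V X (pV V ` A)" using claimA[OF V] by blast
  qed
qed

end
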